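(* Let $k$ be a field, $(X,\leq)$ a locally finite preordered set and $C=IC(X)$. Then every simple right $C$-comodule is isomorphic to $S_x$ for some $x\in X$.
   Context: $(X,\leq)$ is a reflexive transitive relation with all intervals $[x,y]=\{z\mid x\leq z\leq y\}$ finite. $IC(X)$ has $k$-basis $\{e_{x,y}\mid x\leq y\}$, $\Delta(e_{x,y})=\sum_{x\leq z\leq y}e_{x,z}\otimes e_{z,y}$, $\varepsilon(e_{x,y})=\delta_{x,y}$. $x\sim y$ means $x\leq y$ and $y\leq x$. For $x\in X$ with $\sim$-class $\mathcal C$, $S_x=\sum_{y\in\mathcal C}k e_{x,y}$, which is a simple right $C$-subcomodule of $C$. *)

theory Defs
  imports Main "HOL.Vector_Spaces" "HOL-Library.Function_Algebras"
begin

(* Preorder X: the type 'x of class preorder, with relation \<le>.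
   Local finiteness is assumed explicitly in the theorem.

   Incidence coalgebra C = IC(X) over the field 'k: its elements are the finite
   linear combinations  \<Sum> c(x,y) e_{x,y}  (x \<le> y), represented as functions
   c :: 'x \<times> 'x \<Rightarrow> 'k with finite support contained in {(x,y). x \<le> y}.

   For a k-vector space M, an element of M \<otimes> C is uniquely  \<Sum> m_{a,b} \<otimes> e_{a,b};
   we represent it by its coefficient family  'x \<times> 'x \<Rightarrow> 'm  (finite support on
   pairs a \<le> b).  A right coaction \<rho> : M \<rightarrow> M \<otimes> C is thus a map
   rho :: 'm \<Rightarrow> ('x \<times> 'x \<Rightarrow> 'm). *)

definition IC :: "('x::preorder \<times> 'x \<Rightarrow> 'k::field) set" where
  "IC = {c. finite {p. c p \<noteq> 0} \<and> (\<forall>a b. c (a,b) \<noteq> 0 \<longrightarrow> a \<le> b)}"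

definition ic_scale :: "'k::field \<Rightarrow> ('x \<times> 'x \<Rightarrow> 'k) \<Rightarrow> ('x \<times> 'x \<Rightarrow> 'k)" where
  "ic_scale a c = (\<lambda>p. a * c p)"

text \<open>The comultiplication of C viewed as the right coaction of C on itself:
  Delta(e_{x,y}) = sum over x<=z<=y of e_{x,z} (x) e_{z,y}; the coefficient of
  e_{a,b} (second tensor factor) of Delta(c) is the element
  sum over u<=a of c(u,b) e_{u,a} (when a<=b).\<close>
definition ic_comul :: "('x::preorder \<times> 'x \<Rightarrow> 'k::field) \<Rightarrow> ('x \<times> 'x \<Rightarrow> ('x \<times> 'x \<Rightarrow> 'k))" where
  "ic_comul c = (\<lambda>(a,b). (\<lambda>(u,v). if v = a \<and> u \<le> a \<and> a \<le> b then c (u,b) else 0))"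

text \<open>S_x = span of e_{x,y}, y in the ~-class of x.\<close>
definition S_simple :: "'x::preorder \<Rightarrow> ('x \<times> 'x \<Rightarrow> 'k::field) set" where
  "S_simple x = {c. \<forall>u v. c (u,v) \<noteq> 0 \<longrightarrow> u = x \<and> x \<le> v \<and> v \<le> x}"

text \<open>A right C-comodule: a k-vector space V (a subspace of a k-vector space type 'm,
  scalar multiplication sc) with a linear coaction rho : V \<rightarrow> V \<otimes> C satisfying
  coassociativity (rho \<otimes> id) rho = (id \<otimes> Delta) rho and counitality
  (id \<otimes> epsilon) rho = id, written out in the basis e_{a,b} \<otimes> e_{c,d} of C \<otimes> C.\<close>
definition IC_comodule ::
  "('k::field \<Rightarrow> 'm::ab_group_add \<Rightarrow> 'm) \<Rightarrow> 'm set \<Rightarrow> ('m \<Rightarrow> ('x::preorder \<times> 'x \<Rightarrow> 'm)) \<Rightarrow> bool" where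
  "IC_comodule sc V rho \<longleftrightarrow>
     vector_space sc \<and> 0 \<in> V \<and> (\<forall>m\<in>V. \<forall>m'\<in>V. m + m' \<in> V) \<and> (\<forall>c. \<forall>m\<in>V. sc c m \<in> V) \<and>
     (\<forall>m\<in>V. finite {p. rho m p \<noteq> 0} \<and> (\<forall>a b. rho m (a,b) \<noteq> 0 \<longrightarrow> a \<le> b)
              \<and> (\<forall>p. rho m p \<in> V)) \<and>
     (\<forall>m\<in>V. \<forall>m'\<in>V. rho (m + m') = (\<lambda>p. rho m p + rho m' p)) \<and>
     (\<forall>m\<in>V. \<forall>c. rho (sc c m) = (\<lambda>p. sc c (rho m p))) \<and>
     (\<forall>m\<in>V. \<forall>a b c d. a \<le> b \<longrightarrow> c \<le> d \<longrightarrow>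
         rho (rho m (c,d)) (a,b) = (if b = c then rho m (a,d) else 0)) \<and>
     (\<forall>m\<in>V. (\<Sum>a\<in>{a. rho m (a,a) \<noteq> 0}. rho m (a,a)) = m)"

definition IC_subcomodule ::
  "('k::field \<Rightarrow> 'm::ab_group_add \<Rightarrow> 'm) \<Rightarrow> 'm set \<Rightarrow> ('m \<Rightarrow> ('x::preorder \<times> 'x \<Rightarrow> 'm)) \<Rightarrow> 'm set \<Rightarrow> bool" where
  "IC_subcomodule sc V rho N \<longleftrightarrow>
     N \<subseteq> V \<and> 0 \<in> N \<and> (\<forall>m\<in>N. \<forall>m'\<in>N. m + m' \<in> N) \<and> (\<forall>c. \<forall>m\<in>N. sc c m \<in> N) \<and> (\<forall>m\<in>N. \<forall>p. rho m p \<in> N)"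

definition IC_simple_comodule ::
  "('k::field \<Rightarrow> 'm::ab_group_add \<Rightarrow> 'm) \<Rightarrow> 'm set \<Rightarrow> ('m \<Rightarrow> ('x::preorder \<times> 'x \<Rightarrow> 'm)) \<Rightarrow> bool" where
  "IC_simple_comodule sc V rho \<longleftrightarrow>
     IC_comodule sc V rho \<and> V \<noteq> {0} \<and>
     (\<forall>N. IC_subcomodule sc V rho N \<longrightarrow> N = {0} \<or> N = V)"

text \<open>Isomorphism of comodules: a linear bijection commuting with the coactions,
  rho2 \<circ> f = (f \<otimes> id) \<circ> rho1.\<close>
definition IC_comodule_iso ::
  "('k::field \<Rightarrow> 'm::ab_group_add \<Rightarrow> 'm) \<Rightarrow> 'm set \<Rightarrow> ('m \<Rightarrow> ('x::preorder \<times> 'x \<Rightarrow> 'm)) \<Rightarrow>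
   ('k \<Rightarrow> 'n::ab_group_add \<Rightarrow> 'n) \<Rightarrow> 'n set \<Rightarrow> ('n \<Rightarrow> ('x \<times> 'x \<Rightarrow> 'n)) \<Rightarrow> ('m \<Rightarrow> 'n) \<Rightarrow> bool" where
  "IC_comodule_iso sc1 V1 rho1 sc2 V2 rho2 f \<longleftrightarrow>
     bij_betw f V1 V2 \<and>
     (\<forall>m\<in>V1. \<forall>m'\<in>V1. f (m + m') = f m + f m') \<and>
     (\<forall>m\<in>V1. \<forall>c. f (sc1 c m) = sc2 c (f m)) \<and>
     (\<forall>m\<in>V1. \<forall>p. rho2 (f m) p = f (rho1 m p))"

end

theory Submission
  imports Defs
begin

lemma finite_preorder_minimal:
  fixes A :: "'x::preorder set"
  assumes "finite A" "A \<noteq> {}"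
  shows "\<exists>x\<in>A. \<forall>c\<in>A. c \<le> x \<longrightarrow> x \<le> c"
  using assms
proof (induction A rule: finite_ne_induct)
  case (singleton a) then show ?case by auto
next
  case (insert a F)
  then obtain x where x: "x \<in> F" "\<forall>c\<in>F. c \<le> x \<longrightarrow> x \<le> c" by blast
  show ?case
  proof (cases "a \<le> x \<and> \<not> x \<le> a")
    case True
    have "\<forall>c\<in>insert a F. c \<le> a \<longrightarrow> a \<le> c"
    proof (intro ballI impI)
      fix c assume c: "c \<in> insert a F" "c \<le> a"
      show "a \<le> c"
      proof (cases "c = a")
        case False
        then have "c \<in> F" using c by simp
        moreover have "c \<le> x" using c True order_trans by blast
        ultimately have "x \<le> c" using x by blast
        then show ?thesis using True order_trans by blast
      qed simp
    qed
    then show ?thesis by blast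
  next
    case False
    then show ?thesis using x by blast
  qed
qed

theorem mainTheorem5:
  fixes sc :: "'k::field \<Rightarrow> 'm::ab_group_add \<Rightarrow> 'm"
    and V :: "'m set"
    and rho :: "'m \<Rightarrow> ('x::preorder \<times> 'x \<Rightarrow> 'm)"
  assumes locfin: "\<forall>x y::'x. finite {z. x \<le> z \<and> z \<le> y}"
    and simple: "IC_simple_comodule sc V rho"
  shows "\<exists>x::'x. \<exists>f. IC_comodule_iso sc V rho ic_scale (S_simple x) ic_comul f"
proof -
  have comod: "IC_comodule sc V rho" and Vne: "V \<noteq> {0}"
    and sub: "\<And>N. IC_subcomodule sc V rho N \<Longrightarrow> N = {0} \<or> N = V"
    using simple unfolding IC_simple_comodule_def by auto
  note C = comod[unfolded IC_comodule_def]
  note vs = C[THEN conjunct1]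
  note C1 = C[THEN conjunct2]
  note V0 = C1[THEN conjunct1]
  note C2 = C1[THEN conjunct2]
  note VA = C2[THEN conjunct1]
  note C3 = C2[THEN conjunct2]
  note VS = C3[THEN conjunct1]
  note C4 = C3[THEN conjunct2]
  note R1 = C4[THEN conjunct1]
  note C5 = C4[THEN conjunct2]
  note R2 = C5[THEN conjunct1]
  note C6 = C5[THEN conjunct2]
  note R3 = C6[THEN conjunct1]
  note C7 = C6[THEN conjunct2]
  note R4 = C7[THEN conjunct1]
  note R5 = C7[THEN conjunct2]
  have Vadd: "\<And>m m'. m \<in> V \<Longrightarrow> m' \<in> V \<Longrightarrow> m + m' \<in> V" using VA by blast
  have Vsc: "\<And>c m. m \<in> V \<Longrightarrow> sc c m \<in> V" using VS by blast
  have rfin: "\<And>m. m \<in> V \<Longrightarrow> finite {p. rho m p \<noteq> 0}" using R1 by blast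
  have rle: "\<And>m a b. m \<in> V \<Longrightarrow> rho m (a,b) \<noteq> 0 \<Longrightarrow> a \<le> b" using R1 by blast
  have rV: "\<And>m p. m \<in> V \<Longrightarrow> rho m p \<in> V" using R1 by blast
  have radd: "\<And>m m'. m \<in> V \<Longrightarrow> m' \<in> V \<Longrightarrow> rho (m + m') = (\<lambda>p. rho m p + rho m' p)" using R2 by blast
  have rsc: "\<And>m c. m \<in> V \<Longrightarrow> rho (sc c m) = (\<lambda>p. sc c (rho m p))" using R3 by blast
  have coass: "\<And>m a b c d. m \<in> V \<Longrightarrow> a \<le> b \<Longrightarrow> c \<le> d \<Longrightarrow>
         rho (rho m (c,d)) (a,b) = (if b = c then rho m (a,d) else 0)" using R4 by blast
  have counit: "\<And>m. m \<in> V \<Longrightarrow> (\<Sum>a\<in>{a. rho m (a,a) \<noteq> 0}. rho m (a,a)) = m" using R5 by blast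
  interpret vs: vector_space sc by (rule vs)
  have r0: "rho 0 = (\<lambda>p. 0)"
  proof
    fix p
    have h: "rho (0 + 0) = (\<lambda>p. rho 0 p + rho 0 p)" using radd V0 by blast
    have "rho 0 p = rho 0 p + rho 0 p" using fun_cong[OF h, of p] by simp
    then show "rho 0 p = 0" by simp
  qed
  have rsum: "finite S' \<Longrightarrow> (\<forall>y\<in>S'. h y \<in> V) \<Longrightarrow>
       sum h S' \<in> V \<and> rho (sum h S') = (\<lambda>p. \<Sum>y\<in>S'. rho (h y) p)" for S' and h :: "'x \<Rightarrow> 'm"
  proof (induction S' rule: finite_induct)
    case empty then show ?case using V0 r0 by simp
  next
    case (insert a F)
    then have hF: "sum h F \<in> V" and rF: "rho (sum h F) = (\<lambda>p. \<Sum>y\<in>F. rho (h y) p)"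
      and ha: "h a \<in> V" by auto
    have "sum h (insert a F) = h a + sum h F" using insert(1,2) by simp
    moreover have "h a + sum h F \<in> V" using Vadd[OF ha hF] .
    moreover have "rho (h a + sum h F) = (\<lambda>p. rho (h a) p + (\<Sum>y\<in>F. rho (h y) p))"
      using radd[OF ha hF] rF by simp
    ultimately show ?case using insert(1,2) by simp
  qed
  obtain m where m: "m \<in> V" "m \<noteq> 0" using Vne V0 by blast
  have "{a. rho m (a,a) \<noteq> 0} \<noteq> {}"
  proof
    assume "{a. rho m (a,a) \<noteq> 0} = {}"
    then have "(\<Sum>a\<in>{a. rho m (a,a) \<noteq> 0}. rho m (a,a)) = 0" by simp
    then show False using counit[OF m(1)] m(2) by simp
  qed
  then obtain d where d: "rho m (d,d) \<noteq> 0" by blast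
  define A where "A = {c. rho m (c,d) \<noteq> 0}"
  have finA: "finite A"
  proof -
    have "A \<subseteq> fst ` {p. rho m p \<noteq> 0}" unfolding A_def by force
    then show ?thesis using rfin[OF m(1)] finite_surj by blast
  qed
  have "d \<in> A" using d A_def by simp
  then obtain x where xA: "x \<in> A" and xmin: "\<forall>c\<in>A. c \<le> x \<longrightarrow> x \<le> c"
    using finite_preorder_minimal[OF finA] by blast
  have xd: "x \<le> d" using xA A_def rle m(1) by blast
  define K where "K = {y. x \<le> y \<and> y \<le> x}"
  have finK: "finite K" unfolding K_def using locfin by blast
  define v where "v y = rho m (y,d)" for y
  have vV: "v y \<in> V" for y unfolding v_def using rV m(1) by blast
  have vx: "v x \<noteq> 0" using xA A_def v_def by simp
  have rv: "y \<in> K \<Longrightarrow> rho (v y) (a,b) = (if a \<le> b \<and> b = y then v a else 0)" for y a b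
  proof -
    assume y: "y \<in> K"
    then have yd: "y \<le> d" using xd K_def order_trans by blast
    show ?thesis
    proof (cases "a \<le> b")
      case True
      then show ?thesis using coass[OF m(1) True yd] v_def by simp
    next
      case False
      then show ?thesis using rle[OF vV, of y a b] by auto
    qed
  qed
  have vzero: "a \<le> x \<Longrightarrow> a \<notin> K \<Longrightarrow> v a = 0" for a
    using xmin unfolding A_def K_def v_def by auto
  define S where "S = (S_simple x :: ('x \<times> 'x \<Rightarrow> 'k) set)"
  have Sdef: "c \<in> S \<longleftrightarrow> (\<forall>u w. c (u,w) \<noteq> 0 \<longrightarrow> u = x \<and> w \<in> K)" for c
    unfolding S_def S_simple_def K_def by auto
  define g where "g c = (\<Sum>y\<in>K. sc (c (x,y)) (v y))" for c :: "'x \<times> 'x \<Rightarrow> 'k"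
  have gV: "g c \<in> V" for c
  proof -
    have "\<forall>y\<in>K. sc (c (x,y)) (v y) \<in> V" using vV Vsc by blast
    then show ?thesis unfolding g_def using rsum[OF finK, of "\<lambda>y. sc (c (x,y)) (v y)"] by blast
  qed
  have gadd: "g (c + c') = g c + g c'" for c c'
    unfolding g_def by (simp add: vs.scale_left_distrib sum.distrib)
  have gdiff: "g (c - c') = g c - g c'" for c c'
    unfolding g_def by (simp add: vs.scale_left_diff_distrib sum_subtractf)
  have gsc: "g (ic_scale t c) = sc t (g c)" for t c
    unfolding g_def ic_scale_def by (simp add: vs.scale_sum_right)
  have g0: "g 0 = 0" unfolding g_def by simp
  have F1: "c \<in> S \<Longrightarrow> rho (g c) (a,b) = (if a \<le> b \<and> b \<in> K then sc (c(x,b)) (v a) else 0)" for c a b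
  proof -
    assume c: "c \<in> S"
    have "rho (g c) (a,b) = (\<Sum>y\<in>K. rho (sc (c (x,y)) (v y)) (a,b))"
      unfolding g_def using rsum[OF finK, of "\<lambda>y. sc (c (x,y)) (v y)"] vV Vsc by auto
    also have "\<dots> = (\<Sum>y\<in>K. (if b = y then (if a \<le> b then sc (c (x,y)) (v a) else 0) else 0))"
      by (rule sum.cong) (auto simp: rsc[OF vV] rv)
    also have "\<dots> = (if b \<in> K then (if a \<le> b then sc (c (x,b)) (v a) else 0) else 0)"
      using finK by (simp add: sum.delta)
    finally show ?thesis by auto
  qed
  have F2: "g (ic_comul c (a,b)) = (if a \<in> K \<and> a \<le> b then sc (c(x,b)) (v a) else 0)" for c a b
  proof -
    have "g (ic_comul c (a,b)) = (\<Sum>y\<in>K. (if y = a then (if x \<le> a \<and> a \<le> b then sc (c (x,b)) (v y) else 0) else 0))"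
      unfolding g_def ic_comul_def by (rule sum.cong) auto
    also have "\<dots> = (if a \<in> K then (if x \<le> a \<and> a \<le> b then sc (c (x,b)) (v a) else 0) else 0)"
      using finK by (simp add: sum.delta')
    finally show ?thesis by (auto simp: K_def)
  qed
  have grho: "c \<in> S \<Longrightarrow> rho (g c) p = g (ic_comul c p)" for c p
  proof -
    assume c: "c \<in> S"
    obtain a b where p: "p = (a,b)" by (cases p)
    show ?thesis
    proof (cases "a \<le> b \<and> b \<in> K")
      case True
      show ?thesis
      proof (cases "a \<in> K")
        case True2: True
        then show ?thesis using True F1[OF c] F2 p by simp
      next
        case False
        have "a \<le> x" using True K_def order_trans by blast
        then have "v a = 0" using vzero False by blast
        then show ?thesis using True False F1[OF c] F2 p by simp
      qed
    next
      case False
      have "\<not> a \<le> b \<or> c (x,b) = 0" using False c Sdef by blast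
      then show ?thesis using False F1[OF c] F2 p by auto
    qed
  qed
  have Scomul: "c \<in> S \<Longrightarrow> ic_comul c p \<in> S" for c p
    unfolding Sdef ic_comul_def K_def by (cases p) (auto split: if_splits intro: order_trans)
  have Sadd: "c \<in> S \<Longrightarrow> c' \<in> S \<Longrightarrow> c + c' \<in> S" for c c'
  proof -
    assume a: "c \<in> S" "c' \<in> S"
    have "(c + c') (u,w) \<noteq> 0 \<Longrightarrow> u = x \<and> w \<in> K" for u w
    proof -
      assume "(c + c') (u,w) \<noteq> 0"
      then have "c (u,w) \<noteq> 0 \<or> c' (u,w) \<noteq> 0" by auto
      then show ?thesis using a Sdef by blast
    qed
    then show ?thesis using Sdef by blast
  qed
  have Ssc: "c \<in> S \<Longrightarrow> ic_scale t c \<in> S" for c t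
    unfolding Sdef ic_scale_def by auto
  have Sdiff: "c \<in> S \<Longrightarrow> c' \<in> S \<Longrightarrow> c - c' \<in> S" for c c'
  proof -
    assume a: "c \<in> S" "c' \<in> S"
    have "(c - c') (u,w) \<noteq> 0 \<Longrightarrow> u = x \<and> w \<in> K" for u w
    proof -
      assume "(c - c') (u,w) \<noteq> 0"
      then have "c (u,w) \<noteq> 0 \<or> c' (u,w) \<noteq> 0" by auto
      then show ?thesis using a Sdef by blast
    qed
    then show ?thesis using Sdef by blast
  qed
  have S0: "0 \<in> S" unfolding Sdef by simp
  have ginj0: "c \<in> S \<Longrightarrow> g c = 0 \<Longrightarrow> c = 0" for c
  proof (rule ccontr)
    assume c: "c \<in> S" and gc: "g c = 0" and cne: "c \<noteq> 0"
    from cne obtain p where "c p \<noteq> 0" by (auto simp: fun_eq_iff)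
    then obtain u w where uw: "c (u,w) \<noteq> 0" by (cases p) auto
    then have u: "u = x" and w: "w \<in> K" using c Sdef by auto
    have "rho (g c) (x,w) = sc (c(x,w)) (v x)" using F1[OF c] w K_def by auto
    then have "sc (c(x,w)) (v x) = 0" using gc r0 by simp
    then show False using uw u vx by simp
  qed
  have ginj: "inj_on g S"
  proof (rule inj_onI)
    fix c c' assume "c \<in> S" "c' \<in> S" "g c = g c'"
    then have "c - c' = 0" using ginj0[OF Sdiff] gdiff by simp
    then show "c = c'" by simp
  qed
  have gsurj: "g ` S = V"
  proof -
    have subN: "IC_subcomodule sc V rho (g ` S)"
      unfolding IC_subcomodule_def
    proof (intro conjI ballI allI)
      show "g ` S \<subseteq> V" using gV by blast
      show "0 \<in> g ` S" using g0 S0 by force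
      fix y y' assume "y \<in> g ` S" "y' \<in> g ` S"
      then obtain c c' where "c \<in> S" "c' \<in> S" "y = g c" "y' = g c'" by blast
      then have "y + y' = g (c + c')" "c + c' \<in> S" using gadd Sadd by auto
      then show "y + y' \<in> g ` S" by blast
    next
      fix t y assume "y \<in> g ` S"
      then obtain c where "c \<in> S" "y = g c" by blast
      then have "sc t y = g (ic_scale t c)" "ic_scale t c \<in> S" using gsc Ssc by auto
      then show "sc t y \<in> g ` S" by blast
    next
      fix y p assume "y \<in> g ` S"
      then obtain c where "c \<in> S" "y = g c" by blast
      then have "rho y p = g (ic_comul c p)" "ic_comul c p \<in> S" using grho Scomul by auto
      then show "rho y p \<in> g ` S" by blast
    qed
    define e where "e = (\<lambda>q. if q = (x,x) then (1::'k) else 0)"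
    have eS: "e \<in> S" unfolding Sdef e_def K_def by auto
    have "g e = v x"
    proof -
      have "g e = (\<Sum>y\<in>K. if y = x then v y else 0)"
        unfolding g_def e_def by (rule sum.cong) auto
      also have "\<dots> = v x" using finK by (simp add: sum.delta' K_def)
      finally show ?thesis .
    qed
    then have "g ` S \<noteq> {0}" using eS vx by (metis imageI singletonD)
    then show ?thesis using sub[OF subN] by blast
  qed
  have bij: "bij_betw g S V" using ginj gsurj by (simp add: bij_betw_def)
  define f where "f = the_inv_into S g"
  have fbij: "bij_betw f V S" unfolding f_def by (rule bij_betw_the_inv_into[OF bij])
  have fS: "m \<in> V \<Longrightarrow> f m \<in> S" for m by (rule bij_betw_apply[OF fbij])
  have gf: "m \<in> V \<Longrightarrow> g (f m) = m" for m
    unfolding f_def by (rule f_the_inv_into_f[OF ginj]) (simp add: gsurj)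
  have fg: "c \<in> S \<Longrightarrow> f (g c) = c" for c
    unfolding f_def by (rule the_inv_into_f_f[OF ginj])
  have "IC_comodule_iso sc V rho ic_scale S ic_comul f"
    unfolding IC_comodule_iso_def
  proof (intro conjI ballI allI)
    show "bij_betw f V S" by (rule fbij)
  next
    fix y y' assume y: "y \<in> V" "y' \<in> V"
    have "f (y + y') = f (g (f y) + g (f y'))" using gf y by simp
    also have "\<dots> = f (g (f y + f y'))" using gadd by simp
    also have "\<dots> = f y + f y'" using fg Sadd fS y by simp
    finally show "f (y + y') = f y + f y'" .
  next
    fix y t assume y: "y \<in> V"
    have "f (sc t y) = f (sc t (g (f y)))" using gf y by simp
    also have "\<dots> = f (g (ic_scale t (f y)))" using gsc by simp
    also have "\<dots> = ic_scale t (f y)" using fg Ssc fS y by simp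
    finally show "f (sc t y) = ic_scale t (f y)" .
  next
    fix y p assume y: "y \<in> V"
    have "f (rho y p) = f (rho (g (f y)) p)" using gf y by simp
    also have "\<dots> = f (g (ic_comul (f y) p))" using grho fS y by simp
    also have "\<dots> = ic_comul (f y) p" using fg Scomul fS y by simp
    finally show "ic_comul (f y) p = f (rho y p)" by simp
  qed
  then have "IC_comodule_iso sc V rho ic_scale (S_simple x) ic_comul f" unfolding S_def .
  then show ?thesis by (intro exI)
qed

end
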